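(* Let $p$ be an odd prime. (1) Take $k=0$. For every $s\ge2$, $$\mathcal M_{V_{s+2,0}}=p\,\mathcal M_{V_{s,0}}+(p-1)\,\mathcal M_{V_{s+1,0}}+p^{s-1}(p-1)(p^2-1).$$ (2) Take $k=1$. For every $s\ge3$ and $0\le t\le p-1$, $$\mathcal M_{V_{s+2,t}}=\sum_{t_2=0}^{p-1}\mathcal M_{V_{s,t_2}}+\sum_{t_1=1}^{p-1}\mathcal M_{V_{s+1,t_1}}+b_{s,t},$$ where $b_{s,t}=p^{s-1}(p-1)(p^2+p+t)$ if $0\le t<\frac{p-1}{2}$ and $b_{s,t}=p^{s-1}(p-1)(p^2+t)$ if $\frac{p-1}{2}\le t\le p-1$.
   Context: Fix an odd prime $p$ and an integer $k\ge 0$. For integers $0\le i<n$ write $\lambda(n,i)=(n-i,1^i)$ for the hook partition of $n$ with $n-i$ boxes in its first row and $i$ further boxes in its first column. If $\mu=\lambda(n',i')$ is obtained from $\lambda(n,i)$ by appending $m=(n'-i')-(n-i)\ge 0$ boxes to the first row and $n''=i'-i\ge 0$ boxes to the first column, we say $\mu$ is obtained by adding the block $B_{m,n''}$ ($m$ horizontal nodes, $n''$ vertical nodes). Put $x_s=p^k(sp-(s+1))$. The relevant part ("column $k$") of the $p$-Bratteli diagram is the graded directed graph with vertices: on floor $2k+1$, $S_i=\lambda(p^k(p-1),i)$ for $0\le i<p^k(p-1)$; on floor $2(k+s)$ ($s\ge1$), $V_{s,l}=\lambda\big(p^k(2sp-(2s+1)),\,x_s+l\big)$ for $0\le l<p^k$;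 on floor $2(k+s)-1$ ($s\ge2$), $W_{s,l'}=\lambda\big(p^k((2s-1)p-2s),\,x_{s-1}+l'\big)$ for $0\le l'<p^{k+1}$; and edges, each labelled by the block added: (E1) $S_i\to V_{1,l}$ exactly when $i=p^kt+l$ with $0\le t\le p-2$, block $B_{p^kt,\,p^k(p-2-t)}$; (E2) for $s\ge2$, $0\le l<p^k$, $0\le\beta\le p-1$: $V_{s-1,l}\to W_{s,pl+\beta}$, block $B_{p^k(p-1)-((p-1)l+\beta),\,(p-1)l+\beta}$; (E3) for $s\ge 2$, $0\le l'<p^{k+1}$ and $t=\lfloor l'/p^k\rfloor$: $W_{s,l'}\to V_{s,l'-p^kt}$, block $B_{p^kt,\,p^k(p-1-t)}$. A path ending at a vertex $v$ is a sequence of edges starting at some $S_i$ and going up one floor at a time to $v$ ($S_i\to V_{1,\cdot}\to W_{2,\cdot}\to V_{2,\cdot}\to W_{3,\cdot}\to\cdots\to v$); $\mathcal P(v)$ is the set of all paths ending at $v$. The blocks of a path are numbered $B^2,B^3,\dots,B^N$: $B^2$ is the block of the edge leaving $S_i$, and for $j\ge2$, $B^{2j-1}$ is the block of the edge into $W_{j,\cdot}$ and $B^{2j}$ the block of the edge into $V_{j,\cdot}$. Write $B^j=B_{m_j,n_j}$. Descents: $1\in\mathrm{Des}(P)$ iff $m_2=p^kt$ with $0\le t<\frac{p-1}{2}$; $2\notin\mathrm{Des}(P)$; for $3\le j<N$, $j\in\mathrm{Des}(P)$ iff $m_j>m_{j+1}$ and $n_j<n_{j+1}$. $\mathrm{des}(P)=|\mathrm{Des}(P)|$.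 The $p^k$-Fibonacci number of a vertex $v$ is $\mathcal M_v=\sum_{P\in\mathcal P(v)}\mathrm{des}(P)$. *)

theory Defs
  imports Main "HOL-Computational_Algebra.Primes"
begin

text \<open>Vertices of column k of the p-Bratteli diagram:
  S i = S_i (floor 2k+1), V s l = V_{s,l} (floor 2(k+s)), W s l' = W_{s,l'} (floor 2(k+s)-1).\<close>
datatype vert = S nat | V nat nat | W nat nat

fun is_vertex :: "nat \<Rightarrow> nat \<Rightarrow> vert \<Rightarrow> bool" where
  "is_vertex p k (S i) = (i < p^k * (p - 1))"
| "is_vertex p k (V s l) = (1 \<le> s \<and> l < p^k)"
| "is_vertex p k (W s l') = (2 \<le> s \<and> l' < p^(k+1))"

text \<open>Edges (E1)-(E3), returning the label block B_{m,n} as the pair (m,n);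
  None means there is no edge.\<close>
fun edge :: "nat \<Rightarrow> nat \<Rightarrow> vert \<Rightarrow> vert \<Rightarrow> (nat \<times> nat) option" where
  "edge p k (S i) (V s l) =
     (if s = 1 \<and> l < p^k \<and> (\<exists>t. t \<le> p - 2 \<and> i = p^k * t + l)
      then (let t = i div p^k in Some (p^k * t, p^k * (p - 2 - t)))
      else None)"
| "edge p k (V s0 l) (W s l') =
     (if s \<ge> 2 \<and> s0 + 1 = s \<and> l < p^k \<and> (\<exists>\<beta>. \<beta> \<le> p - 1 \<and> l' = p * l + \<beta>)
      then (let \<beta> = l' - p * l in
            Some (p^k * (p - 1) - ((p - 1) * l + \<beta>), (p - 1) * l + \<beta>))
      else None)"
| "edge p k (W s l') (V s0 l) =
     (if s \<ge> 2 \<and> s0 = s \<and> l' < p^(k+1) \<and> l = l' - p^k * (l' div p^k)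
      then (let t = l' div p^k in Some (p^k * t, p^k * (p - 1 - t)))
      else None)"
| "edge p k _ _ = None"

text \<open>A path ending at v, represented by its list of vertices (edges are determined
  by their endpoints): it starts at some S_i and uses an edge at each step.\<close>
definition paths :: "nat \<Rightarrow> nat \<Rightarrow> vert \<Rightarrow> vert list set" where
  "paths p k v = {vs. vs \<noteq> [] \<and> (\<exists>i. hd vs = S i) \<and> last vs = v
       \<and> (\<forall>u \<in> set vs. is_vertex p k u)
       \<and> (\<forall>j. j + 1 < length vs \<longrightarrow> edge p k (vs ! j) (vs ! (j + 1)) \<noteq> None)}"

text \<open>The blocks of a path: element number (j-2) of this list is B^j = (m_j, n_j).\<close>
definition blocks :: "nat \<Rightarrow> nat \<Rightarrow> vert list \<Rightarrow> (nat \<times> nat) list" where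
  "blocks p k vs = map (\<lambda>j. the (edge p k (vs ! j) (vs ! (j + 1)))) [0..<length vs - 1]"

definition blk :: "nat \<Rightarrow> nat \<Rightarrow> vert list \<Rightarrow> nat \<Rightarrow> nat \<times> nat" where
  "blk p k vs j = blocks p k vs ! (j - 2)"

text \<open>Descent set; the blocks are B^2..B^N with N = length (blocks) + 1.\<close>
definition Des :: "nat \<Rightarrow> nat \<Rightarrow> vert list \<Rightarrow> nat set" where
  "Des p k vs =
     (if \<exists>t. fst (blk p k vs 2) = p^k * t \<and> 2 * t < p - 1 then {1} else {})
     \<union> {j. 3 \<le> j \<and> j < length (blocks p k vs) + 1
            \<and> fst (blk p k vs j) > fst (blk p k vs (j + 1))
            \<and> snd (blk p k vs j) < snd (blk p k vs (j + 1))}"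

definition des :: "nat \<Rightarrow> nat \<Rightarrow> vert list \<Rightarrow> nat" where
  "des p k vs = card (Des p k vs)"

definition M :: "nat \<Rightarrow> nat \<Rightarrow> vert \<Rightarrow> nat" where
  "M p k v = (\<Sum>P \<in> paths p k v. des p k P)"

end

theory Submission
  imports Defs
begin

definition dsc :: "nat \<times> nat \<Rightarrow> nat \<times> nat \<Rightarrow> bool" where
  "dsc b c = (fst b > fst c \<and> snd b < snd c)"

lemma paths_D:
  assumes "vs \<in> paths p k v"
  shows "vs \<noteq> []" "last vs = v" "is_vertex p k v" "\<exists>i. hd vs = S i"
    "\<forall>x\<in>set vs. is_vertex p k x"
    "\<And>j. j + 1 < length vs \<Longrightarrow> edge p k (vs ! j) (vs ! (j + 1)) \<noteq> None"
  using assms unfolding paths_def by auto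

lemma paths_notvertex: "\<not> is_vertex p k v \<Longrightarrow> paths p k v = {}"
  unfolding paths_def by auto

lemma paths_len2:
  assumes "vs \<in> paths p k v" "\<forall>i. v \<noteq> S i" shows "length vs \<ge> 2"
proof -
  from paths_D[OF assms(1)] obtain i where "vs \<noteq> []" "hd vs = S i" "last vs = v" by auto
  then show ?thesis using assms(2) by (cases vs; cases "tl vs") auto
qed

lemma snoc_in:
  assumes "us \<in> paths p k u" "edge p k u w \<noteq> None" "is_vertex p k w"
  shows "us @ [w] \<in> paths p k w"
proof -
  note D = paths_D[OF assms(1)]
  have "\<forall>j. j + 1 < length (us @ [w]) \<longrightarrow> edge p k ((us@[w]) ! j) ((us@[w]) ! (j + 1)) \<noteq> None"
  proof (intro allI impI)
    fix j assume j: "j + 1 < length (us @ [w])"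
    show "edge p k ((us@[w]) ! j) ((us@[w]) ! (j + 1)) \<noteq> None"
    proof (cases "j + 1 < length us")
      case True then show ?thesis using D(6)[of j] by (simp add: nth_append)
    next
      case False
      then have "j = length us - 1" using j by simp
      then show ?thesis using D(1,2) assms(2) by (simp add: nth_append last_conv_nth)
    qed
  qed
  then show ?thesis using D assms(3) unfolding paths_def by auto
qed

lemma snoc_out:
  assumes "vs \<in> paths p k w" "\<forall>i. w \<noteq> S i"
  obtains us where "vs = us @ [w]" "us \<in> paths p k (last us)" "edge p k (last us) w \<noteq> None"
proof -
  have L: "length vs \<ge> 2" using paths_len2 assms by blast
  note D = paths_D[OF assms(1)]
  define us where "us = butlast vs"
  have vs: "vs = us @ [w]" using D(1,2) us_def by (metis append_butlast_last_id)
  have une: "us \<noteq> []" using L vs by auto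
  have lu: "length us = length vs - 1" using vs by simp
  have "us \<in> paths p k (last us)"
  proof -
    have "hd us = hd vs" using vs une by simp
    moreover have "\<forall>x\<in>set us. is_vertex p k x" using D(5) vs by auto
    moreover have "\<forall>j. j + 1 < length us \<longrightarrow> edge p k (us ! j) (us ! (j + 1)) \<noteq> None"
    proof (intro allI impI)
      fix j assume "j + 1 < length us"
      then show "edge p k (us ! j) (us ! (j + 1)) \<noteq> None"
        using D(6)[of j] vs by (simp add: nth_append)
    qed
    ultimately show ?thesis using une D(4) unfolding paths_def by auto
  qed
  moreover have "edge p k (last us) w \<noteq> None"
  proof -
    have "length us - 1 + 1 < length vs" using une vs by simp
    from D(6)[OF this] show ?thesis using une vs
      by (simp add: nth_append last_conv_nth)
  qed
  ultimately show ?thesis by (rule that[OF vs])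
qed

lemma edge_to_S: "edge p k x (S i) = None"
  by (cases x) auto

lemma paths_S:
  assumes "i < p^k * (p - 1)"
  shows "paths p k (S i) = {[S i]}"
proof
  show "{[S i]} \<subseteq> paths p k (S i)" using assms unfolding paths_def by auto
  show "paths p k (S i) \<subseteq> {[S i]}"
  proof
    fix vs assume vs: "vs \<in> paths p k (S i)"
    note D = paths_D[OF vs]
    have "length vs = 1"
    proof (rule ccontr)
      assume "length vs \<noteq> 1"
      moreover have "length vs > 0" using D(1) by simp
      ultimately have n2: "length vs \<ge> 2" by linarith
      then have e1: "length vs - 2 + 1 = length vs - 1" by simp
      have "vs ! (length vs - 1) = S i" using D(1,2) by (simp add: last_conv_nth)
      then have "edge p k (vs ! (length vs - 2)) (vs ! (length vs - 2 + 1)) = None"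
        using e1 edge_to_S by simp
      moreover have "length vs - 2 + 1 < length vs" using n2 by simp
      ultimately show False using D(6) by blast
    qed
    then show "vs \<in> {[S i]}" using D(1,2) by (cases vs) auto
  qed
qed

lemma paths_V1:
  assumes "l < p^k" "p \<ge> 2"
  shows "paths p k (V 1 l) = (\<lambda>t. [S (p^k*t+l), V 1 l]) ` {..p-2}"
proof
  show "paths p k (V 1 l) \<subseteq> (\<lambda>t. [S (p^k*t+l), V 1 l]) ` {..p-2}"
  proof
    fix vs assume vs: "vs \<in> paths p k (V 1 l)"
    then obtain us where us: "vs = us @ [V 1 l]" "us \<in> paths p k (last us)"
      "edge p k (last us) (V 1 l) \<noteq> None"
      using snoc_out by blast
    show "vs \<in> (\<lambda>t. [S (p^k*t+l), V 1 l]) ` {..p-2}"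
    proof (cases "last us")
      case (S i)
      then obtain t where t: "t \<le> p - 2" "i = p^k*t + l" using us(3) by (auto split: if_splits)
      have "is_vertex p k (S i)" using paths_D(3)[OF us(2)] S by simp
      then have "paths p k (S i) = {[S i]}" using paths_S by simp
      then have "us = [S i]" using us(2) S by simp
      then show ?thesis using us(1) t by auto
    next
      case (V a b) then show ?thesis using us(3) by simp
    next
      case (W a b) then show ?thesis using us(3) by (simp split: if_splits)
    qed
  qed
  show "(\<lambda>t. [S (p^k*t+l), V 1 l]) ` {..p-2} \<subseteq> paths p k (V 1 l)"
  proof
    fix vs assume "vs \<in> (\<lambda>t. [S (p^k*t+l), V 1 l]) ` {..p-2}"
    then obtain t where t: "t \<le> p - 2" "vs = [S (p^k*t+l), V 1 l]" by auto
    have "p^k * t + l < p^k * (t+1)" using assms(1) by simp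
    also have "\<dots> \<le> p^k * (p - 1)" using t(1) assms(2) by (intro mult_le_mono2) linarith
    finally have iv: "p^k * t + l < p^k * (p - 1)" .
    have "[S (p^k*t+l)] \<in> paths p k (S (p^k*t+l))" using paths_S[OF iv] by simp
    moreover have "edge p k (S (p^k*t+l)) (V 1 l) \<noteq> None" using t(1) assms(1) by (auto simp: Let_def)
    moreover have "is_vertex p k (V 1 l)" using assms(1) by simp
    ultimately show "vs \<in> paths p k (V 1 l)" using snoc_in t(2) by fastforce
  qed
qed

lemma edge_VW_val:
  assumes "s \<ge> 2" "l' < p^(k+1)" "p > 0"
  shows "edge p k (V (s-1) (l' div p)) (W s l') =
     Some (p^k*(p-1) - ((p-1)*(l' div p) + l' mod p), (p-1)*(l' div p) + l' mod p)"
proof -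
  have a: "l' div p < p^k" using assms(2,3) by (simp add: less_mult_imp_div_less mult.commute)
  have b: "l' mod p \<le> p - 1" proof -
    have "l' mod p < p" using assms(3) by simp
    then show ?thesis by linarith
  qed
  have c: "\<exists>\<beta>. \<beta> \<le> p - 1 \<and> l' = p * (l' div p) + \<beta>" using b by (intro exI[of _ "l' mod p"]) simp
  have d: "l' - p * (l' div p) = l' mod p" by (simp add: minus_mult_div_eq_mod)
  have e: "s - 1 + 1 = s" using assms(1) by simp
  have cond: "s \<ge> 2 \<and> s - 1 + 1 = s \<and> l' div p < p^k \<and> (\<exists>\<beta>. \<beta> \<le> p - 1 \<and> l' = p * (l' div p) + \<beta>)"
    using assms(1) a c e by blast
  have "edge p k (V (s-1) (l' div p)) (W s l') = (let \<beta> = l' - p * (l' div p) in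
            Some (p^k * (p - 1) - ((p - 1) * (l' div p) + \<beta>), (p - 1) * (l' div p) + \<beta>))"
    by (simp only: edge.simps) (rule if_P[OF cond])
  also have "\<dots> = Some (p^k*(p-1) - ((p-1)*(l' div p) + l' mod p), (p-1)*(l' div p) + l' mod p)"
    by (simp only: Let_def d)
  finally show ?thesis .
qed

lemma paths_W:
  assumes "s \<ge> 2" "l' < p^(k+1)" "p > 0"
  shows "paths p k (W s l') = (\<lambda>us. us @ [W s l']) ` paths p k (V (s-1) (l' div p))"
proof
  show "paths p k (W s l') \<subseteq> (\<lambda>us. us @ [W s l']) ` paths p k (V (s-1) (l' div p))"
  proof
    fix vs assume vs: "vs \<in> paths p k (W s l')"
    then obtain us where us: "vs = us @ [W s l']" "us \<in> paths p k (last us)"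
      "edge p k (last us) (W s l') \<noteq> None"
      using snoc_out by blast
    have "last us = V (s-1) (l' div p)"
    proof (cases "last us")
      case (S i) then show ?thesis using us(3) by simp
    next
      case (V a b)
      then obtain \<beta> where "\<beta> \<le> p - 1" "l' = p * b + \<beta>" "a + 1 = s" using us(3) by (auto split: if_splits)
      then have "b = l' div p" "a = s - 1" using assms(3) by auto
      then show ?thesis using V by simp
    next
      case (W a b) then show ?thesis using us(3) by simp
    qed
    then show "vs \<in> (\<lambda>us. us @ [W s l']) ` paths p k (V (s-1) (l' div p))" using us by auto
  qed
  show "(\<lambda>us. us @ [W s l']) ` paths p k (V (s-1) (l' div p)) \<subseteq> paths p k (W s l')"
  proof
    fix vs assume "vs \<in> (\<lambda>us. us @ [W s l']) ` paths p k (V (s-1) (l' div p))"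
    then obtain us where "vs = us @ [W s l']" "us \<in> paths p k (V (s-1) (l' div p))" by auto
    moreover have "edge p k (V (s-1) (l' div p)) (W s l') \<noteq> None" using edge_VW_val[OF assms] by simp
    moreover have "is_vertex p k (W s l')" using assms by simp
    ultimately show "vs \<in> paths p k (W s l')" using snoc_in by blast
  qed
qed

lemma edge_WV_val:
  assumes "s \<ge> 2" "t < p" "l < p^k"
  shows "edge p k (W s (p^k*t + l)) (V s l) = Some (p^k*t, p^k*(p-1-t))"
proof -
  have "p^k*t + l < p^k * (t+1)" using assms(3) by simp
  also have "\<dots> \<le> p^k * p" using assms(2) by (intro mult_le_mono2) linarith
  finally have a: "p^k*t + l < p^(k+1)" by (simp add: mult.commute)
  have b: "(p^k*t + l) div p^k = t" using assms(3) by (metis add.commute div_less div_mult_self2 less_nat_zero_code add_0)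
  show ?thesis using assms(1) a b by (auto simp: Let_def)
qed

lemma paths_V:
  assumes "s \<ge> 2" "l < p^k" "p > 0"
  shows "paths p k (V s l) = (\<Union>t\<in>{..<p}. (\<lambda>us. us @ [V s l]) ` paths p k (W s (p^k*t + l)))"
proof
  show "paths p k (V s l) \<subseteq> (\<Union>t\<in>{..<p}. (\<lambda>us. us @ [V s l]) ` paths p k (W s (p^k*t + l)))"
  proof
    fix vs assume vs: "vs \<in> paths p k (V s l)"
    then obtain us where us: "vs = us @ [V s l]" "us \<in> paths p k (last us)"
      "edge p k (last us) (V s l) \<noteq> None"
      using snoc_out by blast
    obtain t where t: "t < p" "last us = W s (p^k*t + l)"
    proof (cases "last us")
      case (S i) then show ?thesis using us(3) assms(1) by simp
    next
      case (V a b) then show ?thesis using us(3) by simp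
    next
      case (W a b)
      then have h: "a = s" "b < p^(k+1)" "l = b - p^k * (b div p^k)" using us(3) by (auto split: if_splits)
      have "b div p^k < p" using h(2) by (simp add: less_mult_imp_div_less)
      moreover have "b = p^k * (b div p^k) + l" using h(3) by (simp add: minus_mult_div_eq_mod)
      ultimately show ?thesis using that W h(1) by metis
    qed
    then show "vs \<in> (\<Union>t\<in>{..<p}. (\<lambda>us. us @ [V s l]) ` paths p k (W s (p^k*t + l)))"
      using us by auto
  qed
  show "(\<Union>t\<in>{..<p}. (\<lambda>us. us @ [V s l]) ` paths p k (W s (p^k*t + l))) \<subseteq> paths p k (V s l)"
  proof
    fix vs assume "vs \<in> (\<Union>t\<in>{..<p}. (\<lambda>us. us @ [V s l]) ` paths p k (W s (p^k*t + l)))"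
    then obtain t us where "t < p" "vs = us @ [V s l]" "us \<in> paths p k (W s (p^k*t + l))" by auto
    moreover have "edge p k (W s (p^k*t + l)) (V s l) \<noteq> None" using edge_WV_val[OF assms(1) \<open>t < p\<close> assms(2)] by simp
    moreover have "is_vertex p k (V s l)" using assms by simp
    ultimately show "vs \<in> paths p k (V s l)" using snoc_in by blast
  qed
qed

lemma blocks_snoc:
  assumes "us \<noteq> []"
  shows "blocks p k (us @ [w]) = blocks p k us @ [the (edge p k (last us) w)]"
proof -
  obtain n where n: "length us = Suc n" using assms by (cases us) auto
  have "[0..<length (us @ [w]) - 1] = [0..<n] @ [n]" using n by simp
  then have "blocks p k (us @ [w]) = map (\<lambda>j. the (edge p k ((us@[w]) ! j) ((us@[w]) ! (j + 1)))) [0..<n]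
      @ [the (edge p k ((us@[w]) ! n) ((us@[w]) ! (n + 1)))]"
    unfolding blocks_def by simp
  also have "map (\<lambda>j. the (edge p k ((us@[w]) ! j) ((us@[w]) ! (j + 1)))) [0..<n]
      = map (\<lambda>j. the (edge p k (us ! j) (us ! (j + 1)))) [0..<n]"
    using n by (intro map_cong) (auto simp: nth_append)
  also have "(us@[w]) ! n = last us" using n assms by (simp add: nth_append last_conv_nth)
  also have "(us@[w]) ! (n + 1) = w" using n by (simp add: nth_append)
  finally show ?thesis using n unfolding blocks_def by simp
qed

lemma length_blocks: "length (blocks p k vs) = length vs - 1"
  unfolding blocks_def by simp

lemma Des_finite: "finite (Des p k vs)"
proof -
  have "Des p k vs \<subseteq> {1} \<union> {..<length (blocks p k vs) + 1}" unfolding Des_def by auto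
  then show ?thesis by (rule finite_subset) auto
qed

lemma Des_bound: "length (blocks p k vs) \<ge> 1 \<Longrightarrow> j \<in> Des p k vs \<Longrightarrow> j < length (blocks p k vs) + 1"
  unfolding Des_def by (auto split: if_splits)

lemma des_snoc:
  assumes "length us \<ge> 2"
  shows "des p k (us @ [w]) = des p k us +
     (if length us \<ge> 3 \<and> dsc (last (blocks p k us)) (the (edge p k (last us) w)) then 1 else 0)"
proof -
  define B where "B = blocks p k us"
  define b where "b = the (edge p k (last us) w)"
  define n where "n = length us"
  have ne: "us \<noteq> []" using assms by auto
  have Bn: "blocks p k (us @ [w]) = B @ [b]" using blocks_snoc[OF ne] B_def b_def by simp
  have lB: "length B = n - 1" using B_def n_def length_blocks by simp
  have Bne: "B \<noteq> []" and lB2: "n - 2 = length B - 1" using lB assms n_def by auto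
  have lastB: "last B = B ! (n - 2)" using Bne lB2 by (simp add: last_conv_nth)
  have blk_new: "blk p k (us @ [w]) j = (B @ [b]) ! (j - 2)" for j unfolding blk_def Bn ..
  have blk_old: "blk p k us j = B ! (j - 2)" for j unfolding blk_def B_def ..
  have first: "blk p k (us @ [w]) 2 = blk p k us 2" using blk_new blk_old lB assms n_def
    by (simp add: nth_append)
  define X where "X = (if length us \<ge> 3 \<and> dsc (last B) b then {n} else {})"
  have "Des p k (us @ [w]) = Des p k us \<union> X"
  proof -
    have A: "{j. 3 \<le> j \<and> j < length (blocks p k (us@[w])) + 1
            \<and> fst (blk p k (us@[w]) j) > fst (blk p k (us@[w]) (j + 1))
            \<and> snd (blk p k (us@[w]) j) < snd (blk p k (us@[w]) (j + 1))}
        = {j. 3 \<le> j \<and> j < length (blocks p k us) + 1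
            \<and> fst (blk p k us j) > fst (blk p k us (j + 1))
            \<and> snd (blk p k us j) < snd (blk p k us (j + 1))} \<union> X"
    proof (intro set_eqI iffI)
      fix j assume j: "j \<in> {j. 3 \<le> j \<and> j < length (blocks p k (us@[w])) + 1
            \<and> fst (blk p k (us@[w]) j) > fst (blk p k (us@[w]) (j + 1))
            \<and> snd (blk p k (us@[w]) j) < snd (blk p k (us@[w]) (j + 1))}"
      then have j3: "3 \<le> j" "j < n + 1" using Bn lB n_def assms by auto
      show "j \<in> {j. 3 \<le> j \<and> j < length (blocks p k us) + 1
            \<and> fst (blk p k us j) > fst (blk p k us (j + 1))
            \<and> snd (blk p k us j) < snd (blk p k us (j + 1))} \<union> X"
      proof (cases "j < n")
        case True
        then have "blk p k (us@[w]) j = blk p k us j" "blk p k (us@[w]) (j+1) = blk p k us (j+1)"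
          using blk_new blk_old lB j3 by (auto simp: nth_append)
        then show ?thesis using j True lB B_def n_def by auto
      next
        case False
        then have jn: "j = n" using j3 by simp
        have "blk p k (us@[w]) j = last B" "blk p k (us@[w]) (j+1) = b"
          using blk_new lB jn j3 assms n_def lastB by (auto simp: nth_append)
        then show ?thesis using j jn j3 X_def dsc_def n_def by auto
      qed
    next
      fix j assume j: "j \<in> {j. 3 \<le> j \<and> j < length (blocks p k us) + 1
            \<and> fst (blk p k us j) > fst (blk p k us (j + 1))
            \<and> snd (blk p k us j) < snd (blk p k us (j + 1))} \<union> X"
      show "j \<in> {j. 3 \<le> j \<and> j < length (blocks p k (us@[w])) + 1
            \<and> fst (blk p k (us@[w]) j) > fst (blk p k (us@[w]) (j + 1))
            \<and> snd (blk p k (us@[w]) j) < snd (blk p k (us@[w]) (j + 1))}"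
      proof (cases "j \<in> X")
        case True
        then have jn: "j = n" "n \<ge> 3" "dsc (last B) b" using X_def n_def by (auto split: if_splits)
        have "blk p k (us@[w]) j = last B" "blk p k (us@[w]) (j+1) = b"
          using blk_new lB jn assms n_def lastB by (auto simp: nth_append)
        then show ?thesis using jn Bn lB dsc_def by auto
      next
        case False
        then have j3: "3 \<le> j" "j < n" "fst (blk p k us j) > fst (blk p k us (j + 1))"
            "snd (blk p k us j) < snd (blk p k us (j + 1))" using j lB B_def n_def by auto
        then have "blk p k (us@[w]) j = blk p k us j" "blk p k (us@[w]) (j+1) = blk p k us (j+1)"
          using blk_new blk_old lB by (auto simp: nth_append)
        then show ?thesis using j3 Bn lB by auto
      qed
    qed
    show ?thesis unfolding Des_def first A by auto
  qed
  moreover have "n \<notin> Des p k us"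
  proof
    assume "n \<in> Des p k us"
    moreover have "length (blocks p k us) \<ge> 1" using lB B_def n_def assms by simp
    ultimately have "n < length (blocks p k us) + 1" using Des_bound by blast
    then show False using lB B_def n_def assms by simp
  qed
  ultimately show ?thesis unfolding des_def X_def B_def b_def n_def
    using Des_finite[of p k us] by (auto)
qed

lemma lt_bound:
  assumes "t < p" "l < (p::nat)^k"
  shows "p^k*t + l < p^(k+1)"
proof -
  have "p^k*t + l < p^k * (t+1)" using assms(2) by simp
  also have "\<dots> \<le> p^k * p" using assms(1) by (intro mult_le_mono2) linarith
  finally show ?thesis by (simp add: mult.commute)
qed

lemma div_bound: "l' < p^(k+1) \<Longrightarrow> (p::nat) > 0 \<Longrightarrow> l' div p < p^k"
  by (simp add: less_mult_imp_div_less mult.commute)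

lemma fin_V: "p \<ge> 2 \<Longrightarrow> finite (paths p k (V s l))"
proof (induction s arbitrary: l)
  case 0 then show ?case by (simp add: paths_notvertex)
next
  case (Suc s)
  show ?case
  proof (cases "l < p^k")
    case False then show ?thesis by (simp add: paths_notvertex)
  next
    case True
    show ?thesis
    proof (cases "s = 0")
      case True
      then show ?thesis using paths_V1[OF \<open>l < p^k\<close> Suc.prems] by simp
    next
      case False
      then have s2: "Suc s \<ge> 2" by simp
      have "finite (paths p k (W (Suc s) (p^k*t + l)))" if "t < p" for t
      proof -
        have b: "p^k*t + l < p^(k+1)" using lt_bound[OF that True] .
        show ?thesis using paths_W[OF s2 b] Suc by simp
      qed
      then show ?thesis using paths_V[OF s2 True] Suc.prems by simp
    qed
  qed
qed

lemma fin_W: "p \<ge> 2 \<Longrightarrow> finite (paths p k (W s l'))"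
proof (cases "s \<ge> 2 \<and> l' < p^(k+1)")
  case True
  assume "p \<ge> 2"
  then show ?thesis using paths_W[of s l' p k] True fin_V by simp
next
  case False then show ?thesis by (auto simp: paths_notvertex)
qed

lemma sum_W:
  assumes "s \<ge> 2" "l' < p^(k+1)" "p \<ge> 2"
  shows "(\<Sum>P\<in>paths p k (W s l'). g P) = (\<Sum>Q\<in>paths p k (V (s-1) (l' div p)). g (Q @ [W s l']))"
proof -
  have "inj_on (\<lambda>us. us @ [W s l']) (paths p k (V (s-1) (l' div p)))" by (rule inj_onI) simp
  then show ?thesis using assms by (simp add: paths_W sum.reindex)
qed

lemma sum_V:
  assumes "s \<ge> 2" "l < p^k" "p \<ge> 2"
  shows "(\<Sum>P\<in>paths p k (V s l). g P) = (\<Sum>t<p. \<Sum>Q\<in>paths p k (W s (p^k*t+l)). g (Q @ [V s l]))"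
proof -
  have pk: "p^k > 0" using assms(3) by simp
  have p0: "p > 0" using assms(3) by simp
  have disj: "\<forall>i\<in>{..<p}. \<forall>j\<in>{..<p}. i \<noteq> j \<longrightarrow>
     (\<lambda>us. us @ [V s l]) ` paths p k (W s (p^k*i + l)) \<inter> (\<lambda>us. us @ [V s l]) ` paths p k (W s (p^k*j + l)) = {}"
  proof (intro ballI impI)
    fix i j assume ij: "i \<in> {..<p}" "j \<in> {..<p}" "i \<noteq> j"
    show "(\<lambda>us. us @ [V s l]) ` paths p k (W s (p^k*i + l)) \<inter> (\<lambda>us. us @ [V s l]) ` paths p k (W s (p^k*j + l)) = {}"
    proof (rule ccontr)
      assume "\<not> ?thesis"
      then obtain Q1 Q2 where q: "Q1 \<in> paths p k (W s (p^k*i + l))" "Q2 \<in> paths p k (W s (p^k*j + l))"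
        "Q1 @ [V s l] = Q2 @ [V s l]" by blast
      then have "Q1 = Q2" by simp
      then have "W s (p^k*i + l) = W s (p^k*j + l)" using paths_D(2)[OF q(1)] paths_D(2)[OF q(2)] by metis
      then have "p^k * i = p^k * j" by simp
      then show False using pk ij(3) by simp
    qed
  qed
  have "(\<Sum>P\<in>paths p k (V s l). g P) = (\<Sum>t<p. \<Sum>P\<in>(\<lambda>us. us @ [V s l]) ` paths p k (W s (p^k*t+l)). g P)"
    unfolding paths_V[OF assms(1,2) p0] using assms(3)
    by (subst sum.UNION_disjoint) (auto simp: fin_W disj)
  also have "\<dots> = (\<Sum>t<p. \<Sum>Q\<in>paths p k (W s (p^k*t+l)). g (Q @ [V s l]))"
  proof (rule sum.cong[OF refl])
    fix t
    have "inj_on (\<lambda>us. us @ [V s l]) (paths p k (W s (p^k*t+l)))" by (rule inj_onI) simp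
    then show "(\<Sum>P\<in>(\<lambda>us. us @ [V s l]) ` paths p k (W s (p^k*t+l)). g P) = (\<Sum>Q\<in>paths p k (W s (p^k*t+l)). g (Q @ [V s l]))"
      by (simp add: sum.reindex)
  qed
  finally show ?thesis .
qed

lemma card_V:
  assumes "p \<ge> 2"
  shows "s \<ge> 1 \<Longrightarrow> l < p^k \<Longrightarrow> card (paths p k (V s l)) = (p-1)*p^(s-1)"
proof (induction s arbitrary: l)
  case 0 then show ?case by simp
next
  case (Suc s)
  show ?case
  proof (cases "s = 0")
    case True
    have "inj_on (\<lambda>t. [S (p^k*t+l), V 1 l]) {..p-2}" using assms by (intro inj_onI) simp
    then show ?thesis using paths_V1[OF Suc.prems(2) assms] True assms by (simp add: card_image)
  next
    case False
    then have s2: "Suc s \<ge> 2" by simp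
    have "card (paths p k (V (Suc s) l)) = (\<Sum>P\<in>paths p k (V (Suc s) l). 1)" by simp
    also have "\<dots> = (\<Sum>t<p. \<Sum>Q\<in>paths p k (W (Suc s) (p^k*t+l)). 1)"
      by (rule sum_V[OF s2 Suc.prems(2) assms])
    also have "\<dots> = (\<Sum>t<p. (p-1)*p^(s-1))"
    proof (rule sum.cong[OF refl])
      fix t assume "t \<in> {..<p}"
      then have b: "p^k*t + l < p^(k+1)" using lt_bound Suc.prems(2) by simp
      have "(\<Sum>Q\<in>paths p k (W (Suc s) (p^k*t+l)). 1) = (\<Sum>Q\<in>paths p k (V s ((p^k*t+l) div p)). (1::nat))"
        using sum_W[OF s2 b assms, of "\<lambda>_. 1::nat"] by simp
      also have "\<dots> = (p-1)*p^(s-1)" using Suc.IH[of "(p^k*t+l) div p"] div_bound[OF b] False assms by simp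
      finally show "(\<Sum>Q\<in>paths p k (W (Suc s) (p^k*t+l)). 1) = (p-1)*p^(s-1)" .
    qed
    also have "\<dots> = (p-1)*p^(Suc s - 1)" using False by (cases s) (auto simp: algebra_simps)
    finally show ?thesis .
  qed
qed

lemma card_W:
  assumes "p \<ge> 2" "s \<ge> 2" "l' < p^(k+1)"
  shows "card (paths p k (W s l')) = (p-1)*p^(s-2)"
proof -
  have "card (paths p k (W s l')) = card (paths p k (V (s-1) (l' div p)))"
    using paths_W[OF assms(2,3)] assms(1) by (simp add: card_image inj_on_def)
  also have "\<dots> = (p-1)*p^(s-2)" using card_V[OF assms(1)] div_bound[OF assms(3)] assms
    by (simp add: numeral_2_eq_2)
  finally show ?thesis .
qed

definition bW :: "nat \<Rightarrow> nat \<Rightarrow> nat \<Rightarrow> nat \<times> nat" where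
  "bW p k l' = (p^k*(p-1) - ((p-1)*(l' div p) + l' mod p), (p-1)*(l' div p) + l' mod p)"

definition bV :: "nat \<Rightarrow> nat \<Rightarrow> nat \<Rightarrow> nat \<times> nat" where
  "bV p k l' = (p^k*(l' div p^k), p^k*(p-1-l' div p^k))"

lemma edge_WV_bV:
  assumes "s \<ge> 2" "t < p" "l < p^k"
  shows "the (edge p k (W s (p^k*t + l)) (V s l)) = bV p k (p^k*t + l)"
proof -
  have b: "(p^k*t + l) div p^k = t" using assms(3) by (metis add.commute div_less div_mult_self2 less_nat_zero_code add_0)
  show ?thesis using edge_WV_val[OF assms] b unfolding bV_def by simp
qed

lemma W_struct:
  assumes "Q \<in> paths p k (W s l')" "s \<ge> 2" "l' < p^(k+1)" "p \<ge> 2"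
  shows "length Q \<ge> 3" "last (blocks p k Q) = bW p k l'"
proof -
  have p0: "p > 0" using assms(4) by simp
  obtain R where R: "Q = R @ [W s l']" "R \<in> paths p k (V (s-1) (l' div p))"
    using assms(1) paths_W[OF assms(2,3) p0] by auto
  have "length R \<ge> 2" using paths_len2[OF R(2)] by simp
  then show "length Q \<ge> 3" using R(1) by simp
  have "R \<noteq> []" "last R = V (s-1) (l' div p)" using paths_D[OF R(2)] by auto
  then show "last (blocks p k Q) = bW p k l'"
    using R(1) blocks_snoc edge_VW_val[OF assms(2,3) p0] unfolding bW_def by simp
qed

lemma V_struct:
  assumes "P \<in> paths p k (V s l)" "s \<ge> 2" "l < p^k" "p \<ge> 2"
  shows "length P \<ge> 3"
proof -
  have p0: "p > 0" using assms(4) by simp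
  obtain t Q where "t < p" "P = Q @ [V s l]" "Q \<in> paths p k (W s (p^k*t + l))"
    using assms(1) paths_V[OF assms(2,3) p0] by auto
  then show ?thesis using W_struct(1)[of Q p k s "p^k*t+l"] lt_bound assms by fastforce
qed

lemma R1:
  assumes "s \<ge> 2" "l < p^k" "p \<ge> 2"
  shows "M p k (V s l) = (\<Sum>t<p. M p k (W s (p^k*t+l)) + card (paths p k (W s (p^k*t+l))) *
     (if dsc (bW p k (p^k*t+l)) (bV p k (p^k*t+l)) then 1 else 0))"
proof -
  have "M p k (V s l) = (\<Sum>t<p. \<Sum>Q\<in>paths p k (W s (p^k*t+l)). des p k (Q @ [V s l]))"
    unfolding M_def by (rule sum_V[OF assms])
  also have "\<dots> = (\<Sum>t<p. M p k (W s (p^k*t+l)) + card (paths p k (W s (p^k*t+l))) *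
     (if dsc (bW p k (p^k*t+l)) (bV p k (p^k*t+l)) then 1 else 0))"
  proof (rule sum.cong[OF refl])
    fix t assume "t \<in> {..<p}"
    then have t: "t < p" by simp
    have b: "p^k*t + l < p^(k+1)" using lt_bound[OF t assms(2)] .
    have "(\<Sum>Q\<in>paths p k (W s (p^k*t+l)). des p k (Q @ [V s l])) =
       (\<Sum>Q\<in>paths p k (W s (p^k*t+l)). des p k Q + (if dsc (bW p k (p^k*t+l)) (bV p k (p^k*t+l)) then 1 else 0))"
    proof (rule sum.cong[OF refl])
      fix Q assume Q: "Q \<in> paths p k (W s (p^k*t+l))"
      note WS = W_struct[OF Q assms(1) b assms(3)]
      have "last Q = W s (p^k*t+l)" using paths_D(2)[OF Q] .
      then show "des p k (Q @ [V s l]) = des p k Q + (if dsc (bW p k (p^k*t+l)) (bV p k (p^k*t+l)) then 1 else 0)"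
        using des_snoc[of Q p k "V s l"] WS edge_WV_bV[OF assms(1) t assms(2)] by simp
    qed
    also have "\<dots> = M p k (W s (p^k*t+l)) + card (paths p k (W s (p^k*t+l))) *
     (if dsc (bW p k (p^k*t+l)) (bV p k (p^k*t+l)) then 1 else 0)"
      unfolding M_def by (simp add: sum.distrib)
    finally show "(\<Sum>Q\<in>paths p k (W s (p^k*t+l)). des p k (Q @ [V s l])) = M p k (W s (p^k*t+l)) + card (paths p k (W s (p^k*t+l))) *
     (if dsc (bW p k (p^k*t+l)) (bV p k (p^k*t+l)) then 1 else 0)" .
  qed
  finally show ?thesis .
qed

lemma R2:
  assumes "s \<ge> 2" "l'' < p^(k+1)" "p \<ge> 2"
  shows "M p k (W (s+1) l'') = M p k (V s (l'' div p)) + (\<Sum>t<p. card (paths p k (W s (p^k*t + l'' div p))) *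
     (if dsc (bV p k (p^k*t + l'' div p)) (bW p k l'') then 1 else 0))"
proof -
  have p0: "p > 0" using assms(3) by simp
  define l0 where "l0 = l'' div p"
  have l0: "l0 < p^k" using div_bound[OF assms(2) p0] l0_def by simp
  have s1: "s + 1 \<ge> 2" "s + 1 - 1 = s" using assms(1) by auto
  have "M p k (W (s+1) l'') = (\<Sum>P\<in>paths p k (V s l0). des p k (P @ [W (s+1) l'']))"
    unfolding M_def using sum_W[OF s1(1) assms(2,3)] s1(2) l0_def by simp
  also have "\<dots> = (\<Sum>P\<in>paths p k (V s l0). des p k P + (if dsc (last (blocks p k P)) (bW p k l'') then 1 else 0))"
  proof (rule sum.cong[OF refl])
    fix P assume P: "P \<in> paths p k (V s l0)"
    have "length P \<ge> 3" using V_struct[OF P assms(1) l0 assms(3)] .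
    moreover have "last P = V s l0" using paths_D(2)[OF P] .
    moreover have "the (edge p k (V s l0) (W (s+1) l'')) = bW p k l''"
      using edge_VW_val[OF s1(1) assms(2) p0] s1(2) l0_def unfolding bW_def by simp
    ultimately show "des p k (P @ [W (s+1) l'']) = des p k P + (if dsc (last (blocks p k P)) (bW p k l'') then 1 else 0)"
      using des_snoc[of P p k "W (s+1) l''"] by simp
  qed
  also have "\<dots> = M p k (V s l0) + (\<Sum>P\<in>paths p k (V s l0). (if dsc (last (blocks p k P)) (bW p k l'') then 1 else 0))"
    unfolding M_def by (simp add: sum.distrib)
  also have "(\<Sum>P\<in>paths p k (V s l0). (if dsc (last (blocks p k P)) (bW p k l'') then 1 else 0))
     = (\<Sum>t<p. \<Sum>Q\<in>paths p k (W s (p^k*t+l0)). (if dsc (last (blocks p k (Q @ [V s l0]))) (bW p k l'') then 1 else (0::nat)))"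
    by (rule sum_V[OF assms(1) l0 assms(3)])
  also have "\<dots> = (\<Sum>t<p. card (paths p k (W s (p^k*t + l0))) *
     (if dsc (bV p k (p^k*t + l0)) (bW p k l'') then 1 else 0))"
  proof (rule sum.cong[OF refl])
    fix t assume "t \<in> {..<p}"
    then have t: "t < p" by simp
    have "(\<Sum>Q\<in>paths p k (W s (p^k*t+l0)). (if dsc (last (blocks p k (Q @ [V s l0]))) (bW p k l'') then 1 else (0::nat)))
      = (\<Sum>Q\<in>paths p k (W s (p^k*t+l0)). (if dsc (bV p k (p^k*t + l0)) (bW p k l'') then 1 else 0))"
    proof (rule sum.cong[OF refl])
      fix Q assume Q: "Q \<in> paths p k (W s (p^k*t+l0))"
      have "Q \<noteq> []" "last Q = W s (p^k*t+l0)" using paths_D[OF Q] by auto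
      then have "last (blocks p k (Q @ [V s l0])) = bV p k (p^k*t + l0)"
        using blocks_snoc edge_WV_bV[OF assms(1) t l0] by simp
      then show "(if dsc (last (blocks p k (Q @ [V s l0]))) (bW p k l'') then 1 else (0::nat)) =
        (if dsc (bV p k (p^k*t + l0)) (bW p k l'') then 1 else 0)" by simp
    qed
    then show "(\<Sum>Q\<in>paths p k (W s (p^k*t+l0)). (if dsc (last (blocks p k (Q @ [V s l0]))) (bW p k l'') then 1 else (0::nat)))
      = card (paths p k (W s (p^k*t + l0))) * (if dsc (bV p k (p^k*t + l0)) (bW p k l'') then 1 else 0)"
      by simp
  qed
  finally show ?thesis using l0_def by simp
qed

lemma c1_key:
  fixes h t l :: nat
  assumes "l < 2*h+1"
  shows "(2*h+1)*t + (2*h)*t + l < (2*h+1)*(2*h) \<longleftrightarrow> t < h \<or> (t = h \<and> l < h)"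
proof (cases "t < h")
  case True
  then obtain d where d: "h = t + 1 + d" by (metis add.commute add_Suc less_iff_Suc_add plus_1_eq_Suc)
  have "(2*h+1)*t + (2*h)*t + l < (2*h+1)*(2*h)" using assms unfolding d by (simp add: algebra_simps)
  then show ?thesis using True by simp
next
  case False
  show ?thesis
  proof (cases "t = h")
    case True then show ?thesis by (simp add: algebra_simps)
  next
    case False
    then obtain d where d: "t = h + 1 + d" using \<open>\<not> t < h\<close> by (metis add.commute add_Suc le_less less_iff_Suc_add not_less plus_1_eq_Suc)
    have "\<not> (2*h+1)*t + (2*h)*t + l < (2*h+1)*(2*h)" unfolding d by (simp add: algebra_simps)
    then show ?thesis using False \<open>\<not> t < h\<close> by simp
  qed
qed

lemma c2_key:
  fixes p t a b :: nat
  assumes "a < p" "b < p" "t < p"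
  shows "p*(p-1) < p*t + (p-1)*a + b \<longleftrightarrow> p \<le> t + a \<or> (t + a = p - 1 \<and> a < b)"
proof -
  have e: "p*t + (p-1)*a + a = p*(t+a)" using assms by (cases p) (auto simp: algebra_simps)
  have pp: "p*p = p*(p-1) + p" using assms by (cases p) (auto simp: algebra_simps)
  show ?thesis
  proof (cases "p \<le> t + a")
    case True
    then have "p*p \<le> p*(t+a)" by (intro mult_le_mono2)
    then show ?thesis using e pp assms True by linarith
  next
    case False
    show ?thesis
    proof (cases "t + a = p - 1")
      case True
      then have "p*(t+a) = p*(p-1)" by simp
      then show ?thesis using e True assms by linarith
    next
      case False2: False
      then have "t + a + 2 \<le> p" using False by linarith
      then have "p*(t+a+2) \<le> p*p" by (intro mult_le_mono2)
      then have "p*(t+a) + 2*p \<le> p*p" by (simp add: algebra_simps)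
      then show ?thesis using e pp assms False False2 by linarith
    qed
  qed
qed

lemma sum_ind: "finite A \<Longrightarrow> (\<Sum>x\<in>A. if P x then 1 else 0) = card {x\<in>A. P x}"
  by (simp add: sum.If_cases Int_def conj_commute)

lemma gauss2: "2 * (\<Sum>i<n. i) = n * (n - 1::nat)"
  by (induction n) (auto simp: algebra_simps)

lemma R1c:
  assumes "s \<ge> 2" "l < p^k" "p \<ge> 2"
  shows "M p k (V s l) = (\<Sum>t<p. M p k (W s (p^k*t+l))) + (p-1)*p^(s-2) *
     card {t\<in>{..<p}. dsc (bW p k (p^k*t+l)) (bV p k (p^k*t+l))}"
proof -
  have "M p k (V s l) = (\<Sum>t<p. M p k (W s (p^k*t+l)) + (p-1)*p^(s-2) *
     (if dsc (bW p k (p^k*t+l)) (bV p k (p^k*t+l)) then 1 else 0))"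
    unfolding R1[OF assms]
  proof (rule sum.cong[OF refl])
    fix t assume "t \<in> {..<p}"
    then have "card (paths p k (W s (p^k*t+l))) = (p-1)*p^(s-2)"
      using card_W[OF assms(3,1) lt_bound[of t p l k]] assms(2) by simp
    then show "M p k (W s (p^k*t+l)) + card (paths p k (W s (p^k*t+l))) *
     (if dsc (bW p k (p^k*t+l)) (bV p k (p^k*t+l)) then 1 else 0) = M p k (W s (p^k*t+l)) + (p-1)*p^(s-2) *
     (if dsc (bW p k (p^k*t+l)) (bV p k (p^k*t+l)) then 1 else 0)" by simp
  qed
  also have "\<dots> = (\<Sum>t<p. M p k (W s (p^k*t+l))) + (p-1)*p^(s-2) *
     (\<Sum>t<p. if dsc (bW p k (p^k*t+l)) (bV p k (p^k*t+l)) then 1 else 0)"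
    by (simp add: sum.distrib sum_distrib_left)
  finally show ?thesis by (simp add: sum_ind)
qed

lemma R2c:
  assumes "s \<ge> 2" "l'' < p^(k+1)" "p \<ge> 2"
  shows "M p k (W (s+1) l'') = M p k (V s (l'' div p)) + (p-1)*p^(s-2) *
     card {t\<in>{..<p}. dsc (bV p k (p^k*t + l'' div p)) (bW p k l'')}"
proof -
  have p0: "p > 0" using assms(3) by simp
  have l0: "l'' div p < p^k" using div_bound[OF assms(2) p0] .
  have "M p k (W (s+1) l'') = M p k (V s (l'' div p)) + (\<Sum>t<p. (p-1)*p^(s-2) *
     (if dsc (bV p k (p^k*t + l'' div p)) (bW p k l'') then 1 else 0))"
    unfolding R2[OF assms]
  proof (intro arg_cong2[where f="(+)"] refl sum.cong)
    fix t assume "t \<in> {..<p}"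
    then have "card (paths p k (W s (p^k*t + l'' div p))) = (p-1)*p^(s-2)"
      using card_W[OF assms(3,1) lt_bound[of t p "l'' div p" k]] l0 by simp
    then show "card (paths p k (W s (p^k*t + l'' div p))) *
     (if dsc (bV p k (p^k*t + l'' div p)) (bW p k l'') then 1 else 0) = (p-1)*p^(s-2) *
     (if dsc (bV p k (p^k*t + l'' div p)) (bW p k l'') then 1 else 0)" by simp
  qed
  also have "\<dots> = M p k (V s (l'' div p)) + (p-1)*p^(s-2) *
     (\<Sum>t<p. if dsc (bV p k (p^k*t + l'' div p)) (bW p k l'') then 1 else 0)"
    by (simp add: sum_distrib_left)
  finally show ?thesis by (simp add: sum_ind)
qed

lemma k0_c1:
  assumes "p = 2*h+1"
  shows "card {t\<in>{..<p}. dsc (bW p 0 (p^0*t+0)) (bV p 0 (p^0*t+0))} = h"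
proof -
  have "{t\<in>{..<p}. dsc (bW p 0 (p^0*t+0)) (bV p 0 (p^0*t+0))} = {..<h}"
    using assms by (auto simp: bW_def bV_def dsc_def)
  then show ?thesis by simp
qed

lemma k0_c2:
  assumes "p = 2*h+1" "l < p"
  shows "card {t\<in>{..<p}. dsc (bV p 0 (p^0*t + l div p)) (bW p 0 l)} = l"
proof -
  have "{t\<in>{..<p}. dsc (bV p 0 (p^0*t + l div p)) (bW p 0 l)} = {p-l..<p}"
    using assms by (auto simp: bW_def bV_def dsc_def)
  then show ?thesis using assms by simp
qed

lemma Y_bound: "a < p \<Longrightarrow> b < p \<Longrightarrow> (p-1)*a + b \<le> p*((p::nat)-1)"
proof -
  assume "a < p" "b < p"
  then have "(p-1)*a \<le> (p-1)*(p-1)" by (intro mult_le_mono2) simp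
  moreover have "(p-1)*(p-1) + (p-1) = p*(p-1)" using \<open>a < p\<close> by (cases p) auto
  ultimately show ?thesis using \<open>b < p\<close> by linarith
qed

lemma divmod1: "b < (p::nat) \<Longrightarrow> (p*a+b) div p = a \<and> (p*a+b) mod p = b"
  by (metis add.commute div_less div_mult_self2 less_nat_zero_code add_0 mod_mult_self2 mod_less)

lemma k1_c1:
  assumes "p = 2*h+1" "b < p"
  shows "card {a\<in>{..<p}. dsc (bW p 1 (p^1*a+b)) (bV p 1 (p^1*a+b))} = h + (if b < h then 1 else 0)"
proof -
  have "{a\<in>{..<p}. dsc (bW p 1 (p^1*a+b)) (bV p 1 (p^1*a+b))} = {..<h + (if b < h then 1 else 0)}"
  proof (intro set_eqI)
    fix a
    show "a \<in> {a\<in>{..<p}. dsc (bW p 1 (p^1*a+b)) (bV p 1 (p^1*a+b))} \<longleftrightarrow> a \<in> {..<h + (if b < h then 1 else 0)}"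
    proof (cases "a < p")
      case True
      have dm: "(p*a+b) div p = a" "(p*a+b) mod p = b" using divmod1[OF assms(2)] by auto
      have m: "p*(p-1-a) = p*(p-1) - p*a" by (simp add: diff_mult_distrib2)
      have "dsc (bW p 1 (p^1*a+b)) (bV p 1 (p^1*a+b)) \<longleftrightarrow> p*(p-1) - ((p-1)*a + b) > p*a \<and> (p-1)*a + b < p*(p-1-a)"
        unfolding bW_def bV_def dsc_def using dm by simp
      also have "\<dots> \<longleftrightarrow> p*a + (p-1)*a + b < p*(p-1)" unfolding m by linarith
      also have "\<dots> \<longleftrightarrow> a < h \<or> (a = h \<and> b < h)" using c1_key[of b h a] assms by simp
      finally show ?thesis using True assms by auto
    next
      case False then show ?thesis using assms by auto
    qed
  qed
  then show ?thesis by simp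
qed

lemma nat_aux: "Y \<le> A \<Longrightarrow> X \<le> A \<Longrightarrow> ((A::nat) - Y < X \<and> A - X < Y) \<longleftrightarrow> A < X + Y"
  by linarith

lemma k1_c2:
  assumes "a < p" "b < p"
  shows "card {u\<in>{..<p}. dsc (bV p 1 (p^1*u + (p*a+b) div p)) (bW p 1 (p*a+b))} = a + (if a < b then 1 else 0)"
proof -
  have dm: "(p*a+b) div p = a" "(p*a+b) mod p = b" using divmod1[OF assms(2)] by auto
  have dm2: "(p*u+a) div p = u" for u using divmod1[OF assms(1)] by auto
  have Y: "(p-1)*a + b \<le> p*(p-1)" using Y_bound assms by simp
  have "{u\<in>{..<p}. dsc (bV p 1 (p^1*u + (p*a+b) div p)) (bW p 1 (p*a+b))} = {p - 1 - a + (if a < b then 0 else 1)..<p}"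
  proof (intro set_eqI)
    fix u
    show "u \<in> {u\<in>{..<p}. dsc (bV p 1 (p^1*u + (p*a+b) div p)) (bW p 1 (p*a+b))} \<longleftrightarrow> u \<in> {p - 1 - a + (if a < b then 0 else 1)..<p}"
    proof (cases "u < p")
      case True
      have m: "p*(p-1-u) = p*(p-1) - p*u" by (simp add: diff_mult_distrib2)
      have "dsc (bV p 1 (p^1*u + (p*a+b) div p)) (bW p 1 (p*a+b)) \<longleftrightarrow> p*u > p*(p-1) - ((p-1)*a + b) \<and> p*(p-1-u) < (p-1)*a + b"
        unfolding bW_def bV_def dsc_def using dm dm2 by simp
      also have "\<dots> \<longleftrightarrow> p*(p-1) < p*u + (p-1)*a + b"
      proof -
        have "p*u \<le> p*(p-1)" using True by (intro mult_le_mono2) simp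
        then show ?thesis unfolding m using nat_aux[OF Y] by (simp add: add.assoc)
      qed
      also have "\<dots> \<longleftrightarrow> p \<le> u + a \<or> (u + a = p - 1 \<and> a < b)" using c2_key[OF assms True] by simp
      finally show ?thesis using True assms by auto
    next
      case False then show ?thesis by auto
    qed
  qed
  then show ?thesis using assms by auto
qed

lemma alg0: "(p::nat) = 2*h+1 \<Longrightarrow> (p * MM + (p-1)*q*(p*h)) + (p-1)*(p*q)*h = p*MM + 4*h^2*(p*q)"
  by (simp add: algebra_simps power2_eq_square)

lemma alg1: "(p::nat) = 2*h+1 \<Longrightarrow> X + (p-1)*q*(p*h + b) + (p-1)*(p*q)*(h + c) = X + 2*h*q*(p*h + b) + 2*h*(p*q)*(h + c)"
  by simp

lemma k0_step:
  assumes "p = 2*h+1" "h \<ge> 1" "s \<ge> 2"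
  shows "M p 0 (V (s+1) 0) = p * M p 0 (V s 0) + 4*h^2*p^(s-1)"
proof -
  have p2: "p \<ge> 2" using assms by simp
  have s1: "s + 1 \<ge> 2" using assms by simp
  have A: "M p 0 (V (s+1) 0) = (\<Sum>t<p. M p 0 (W (s+1) t)) + (p-1)*p^(s+1-2) * h"
    using R1c[OF s1 _ p2, of 0 0] k0_c1[OF assms(1)] by simp
  have B: "M p 0 (W (s+1) t) = M p 0 (V s 0) + (p-1)*p^(s-2) * t" if t: "t < p" for t
  proof -
    have "t < p^(0+1)" using t by simp
    from R2c[OF assms(3) this p2] k0_c2[OF assms(1) t] show ?thesis using t by simp
  qed
  have "(\<Sum>t<p. M p 0 (W (s+1) t)) = (\<Sum>t<p. M p 0 (V s 0) + (p-1)*p^(s-2) * t)"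
    using B by simp
  also have "\<dots> = p * M p 0 (V s 0) + (p-1)*p^(s-2) * (\<Sum>t<p. t)"
    by (simp add: sum.distrib sum_distrib_left)
  finally have C: "(\<Sum>t<p. M p 0 (W (s+1) t)) = p * M p 0 (V s 0) + (p-1)*p^(s-2) * (\<Sum>t<p. t)" .
  have G: "(\<Sum>t<p. t) = p * h" using gauss2[of p] assms(1) by simp
  obtain m where m: "s = m + 2" using assms(3) by (metis add.commute le_Suc_ex)
  have E: "p^(s+1-2) = p * p^m" "p^(s-1) = p * p^m" "p^(s-2) = p^m" unfolding m by simp_all
  show ?thesis unfolding A C G E by (rule alg0[OF assms(1)])
qed

lemma k1_step:
  assumes "p = 2*h+1" "h \<ge> 1" "s \<ge> 2" "b < p"
  shows "M p 1 (V (s+1) b) = (\<Sum>a<p. M p 1 (V s a)) + 2*h*p^(s-2)*(p*h + b)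
          + 2*h*p^(s-1)*(h + (if b < h then 1 else 0))"
proof -
  have p2: "p \<ge> 2" using assms by simp
  have s1: "s + 1 \<ge> 2" using assms by simp
  have bl: "b < p^1" using assms by simp
  have A: "M p 1 (V (s+1) b) = (\<Sum>a<p. M p 1 (W (s+1) (p*a+b))) + (p-1)*p^(s+1-2) * (h + (if b < h then 1 else 0))"
    using R1c[OF s1 bl p2] k1_c1[OF assms(1,4)] by simp
  have B: "M p 1 (W (s+1) (p*a+b)) = M p 1 (V s a) + (p-1)*p^(s-2) * (a + (if a < b then 1 else 0))" if a: "a < p" for a
  proof -
    have "p*a+b < p^(1+1)" using lt_bound[OF a bl] by (simp add: mult.commute)
    from R2c[OF assms(3) this p2] k1_c2[OF a assms(4)] divmod1[OF assms(4), of a] show ?thesis by simp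
  qed
  have "(\<Sum>a<p. M p 1 (W (s+1) (p*a+b))) = (\<Sum>a<p. M p 1 (V s a) + (p-1)*p^(s-2) * (a + (if a < b then 1 else 0)))"
    using B by simp
  also have "\<dots> = (\<Sum>a<p. M p 1 (V s a)) + (p-1)*p^(s-2) * ((\<Sum>a<p. a) + (\<Sum>a<p. if a < b then 1 else 0))"
    by (simp add: sum.distrib flip: sum_distrib_left)
  finally have C: "(\<Sum>a<p. M p 1 (W (s+1) (p*a+b))) = (\<Sum>a<p. M p 1 (V s a)) + (p-1)*p^(s-2) * ((\<Sum>a<p. a) + (\<Sum>a<p. if a < b then 1 else 0))" .
  have G: "(\<Sum>t<p. t) = p * h" using gauss2[of p] assms(1) by simp
  have H: "(\<Sum>a<p. if a < b then 1 else 0) = b"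
  proof -
    have "{a\<in>{..<p}. a < b} = {..<b}" using assms(4) by auto
    then show ?thesis by (simp add: sum_ind)
  qed
  obtain m where m: "s = m + 2" using assms(3) by (metis add.commute le_Suc_ex)
  have E: "p^(s+1-2) = p * p^m" "p^(s-1) = p * p^m" "p^(s-2) = p^m" unfolding m by simp_all
  show ?thesis unfolding A C G H E by (rule alg1[OF assms(1)])
qed

lemma algA: "(p::nat) = 2*h+1 \<Longrightarrow> X2 = p*X1 + 4*h^2*(p*q) \<Longrightarrow> X1 = p*X0 + 4*h^2*q \<Longrightarrow>
   X2 = p*X0 + (p-1)*X1 + q*(p-1)*(p^2-1)"
proof -
  assume a: "p = 2*h+1" "X2 = p*X1 + 4*h^2*(p*q)" "X1 = p*X0 + 4*h^2*q"
  have e: "p^2 - 1 = 4*h^2 + 4*h" using a(1) by (simp add: power2_eq_square algebra_simps)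
  show ?thesis unfolding e using a by (simp add: algebra_simps power2_eq_square)
qed
lemma algB: "(p::nat) = 2*h+1 \<Longrightarrow> 2*h*q*(p*h) + 2*h*(p*q)*(h+1) + 2*h*(p*q)*(p*h+t) + 2*h*(p*(p*q))*(h+c)
   = (p*q)*(p-1)*(p^2 + p*c + t)"
  by (simp add: algebra_simps power2_eq_square)

theorem mainTheorem13:
  fixes p :: nat
  assumes "prime p" and "odd p"
  shows "(\<forall>s \<ge> 2. M p 0 (V (s + 2) 0)
            = p * M p 0 (V s 0) + (p - 1) * M p 0 (V (s + 1) 0) + p^(s - 1) * (p - 1) * (p^2 - 1))
       \<and> (\<forall>s \<ge> 3. \<forall>t \<le> p - 1. M p 1 (V (s + 2) t)
            = (\<Sum>t2 = 0..p - 1. M p 1 (V s t2)) + (\<Sum>t1 = 1..p - 1. M p 1 (V (s + 1) t1))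
              + (if 2 * t < p - 1 then p^(s - 1) * (p - 1) * (p^2 + p + t)
                 else p^(s - 1) * (p - 1) * (p^2 + t)))"
proof -
  have p2: "p \<ge> 2" using assms(1) prime_ge_2_nat by blast
  have p3: "p \<ge> 3" using p2 assms(2) by (cases "p = 2") auto
  define h where "h = (p - 1) div 2"
  have ph: "p = 2*h+1" using assms(2) p2 unfolding h_def by presburger
  have h1: "h \<ge> 1" using p3 ph by simp
  have part1: "M p 0 (V (s + 2) 0)
            = p * M p 0 (V s 0) + (p - 1) * M p 0 (V (s + 1) 0) + p^(s - 1) * (p - 1) * (p^2 - 1)"
    if s: "s \<ge> 2" for s
  proof -
    have a: "M p 0 (V (s+1+1) 0) = p * M p 0 (V (s+1) 0) + 4*h^2*p^(s+1-1)"
      using k0_step[OF ph h1] s by simp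
    have b: "M p 0 (V (s+1) 0) = p * M p 0 (V s 0) + 4*h^2*p^(s-1)"
      using k0_step[OF ph h1 s] .
    have e: "p^(s+1-1) = p * p^(s-1)" using s by (cases s) auto
    have a': "M p 0 (V (s+2) 0) = p * M p 0 (V (s+1) 0) + 4*h^2*(p * p^(s-1))"
      using a e by (simp add: numeral_2_eq_2)
    show ?thesis using algA[OF ph a' b] by (simp add: mult.commute mult.left_commute)
  qed
  have part2: "M p 1 (V (s + 2) t)
            = (\<Sum>t2 = 0..p - 1. M p 1 (V s t2)) + (\<Sum>t1 = 1..p - 1. M p 1 (V (s + 1) t1))
              + (if 2 * t < p - 1 then p^(s - 1) * (p - 1) * (p^2 + p + t)
                 else p^(s - 1) * (p - 1) * (p^2 + t))"
    if s: "s \<ge> 3" and t: "t \<le> p - 1" for s t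
  proof -
    obtain m where m: "s = m + 2" using s by (metis add.commute le_Suc_ex le_trans numeral_2_eq_2 numeral_3_eq_3 le_SucI order_refl Suc_leD)
    have tp: "t < p" using t p2 by simp
    have s2: "s \<ge> 2" "s + 1 \<ge> 2" using s by auto
    have a: "M p 1 (V (s+1+1) t) = (\<Sum>a<p. M p 1 (V (s+1) a)) + 2*h*p^(s+1-2)*(p*h + t)
          + 2*h*p^(s+1-1)*(h + (if t < h then 1 else 0))"
      using k1_step[OF ph h1 s2(2) tp] .
    have b: "M p 1 (V (s+1) 0) = (\<Sum>a<p. M p 1 (V s a)) + 2*h*p^(s-2)*(p*h + 0)
          + 2*h*p^(s-1)*(h + (if 0 < h then 1 else 0))"
      using k1_step[OF ph h1 s2(1)] p2 by simp
    have E: "p^(s+1-2) = p * p^m" "p^(s+1-1) = p*(p * p^m)" "p^(s-1) = p * p^m" "p^(s-2) = p^m"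
      unfolding m by simp_all
    have S1: "{0..p-1} = {..<p}" using p2 by auto
    have S2: "{..<p} = insert 0 {1..p-1}" using p2 by auto
    have S3: "(\<Sum>a<p. M p 1 (V (s+1) a)) = M p 1 (V (s+1) 0) + (\<Sum>a=1..p-1. M p 1 (V (s+1) a))"
      unfolding S2 by (subst sum.insert) auto
    have c: "(2 * t < p - 1) = (t < h)" using ph by simp
    have key: "2*h*p^m*(p*h) + 2*h*(p*p^m)*(h+1) + 2*h*(p*p^m)*(p*h+t) + 2*h*(p*(p*p^m))*(h + (if t < h then 1 else 0))
       = (p*p^m)*(p-1)*(p^2 + p*(if t < h then 1 else 0) + t)"
      by (rule algB[OF ph])
    have "M p 1 (V (s + 2) t) = (\<Sum>a<p. M p 1 (V s a)) + (\<Sum>a=1..p-1. M p 1 (V (s+1) a)) +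
       (2*h*p^m*(p*h) + 2*h*(p*p^m)*(h+1) + 2*h*(p*p^m)*(p*h+t) + 2*h*(p*(p*p^m))*(h + (if t < h then 1 else 0)))"
      using a b S3 h1 unfolding E by (simp add: numeral_2_eq_2 algebra_simps)
    also have "\<dots> = (\<Sum>a<p. M p 1 (V s a)) + (\<Sum>a=1..p-1. M p 1 (V (s+1) a)) +
       (p*p^m)*(p-1)*(p^2 + p*(if t < h then 1 else 0) + t)" unfolding key ..
    also have "(p*p^m)*(p-1)*(p^2 + p*(if t < h then 1 else 0) + t) = (if t < h then p*p^m*(p-1)*(p^2+p+t) else p*p^m*(p-1)*(p^2+t))"
      by simp
    finally show ?thesis unfolding S1 c E by simp
  qed
  show ?thesis using part1 part2 by blast
qed

end
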